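(* For any natural numbers $N,d \geq 1$ there are infinitely many primes not in $\mathcal S_{d,N}$.
   Context: For $N\ge1$ let $\Pi_N=\{\prod_{n=1}^N n^{k_n} : k_n\in\{0,1,2,\dots\}\}$; for $d\ge1$ let $\Sigma_{d,N}=\{m_1+\dots+m_d : m_i\in\Pi_N\}$ and $\mathcal S_{d,N}=\bigcup_{i=1}^d\Sigma_{i,N}$. *)

theory Defs
  imports "HOL-Computational_Algebra.Primes"
begin

definition Pi_set :: "nat \<Rightarrow> nat set" where
  "Pi_set N = {m. \<exists>k :: nat \<Rightarrow> nat. m = (\<Prod>n\<in>{1..N}. n ^ k n)}"

definition Sigma_set :: "nat \<Rightarrow> nat \<Rightarrow> nat set" where
  "Sigma_set d N = {s. \<exists>m :: nat \<Rightarrow> nat. (\<forall>i\<in>{1..d}. m i \<in> Pi_set N) \<and> s = (\<Sum>i\<in>{1..d}. m i)}"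

definition S_set :: "nat \<Rightarrow> nat \<Rightarrow> nat set" where
  "S_set d N = (\<Union>i\<in>{1..d}. Sigma_set i N)"

end

theory Submission imports Defs "HOL-Number_Theory.Number_Theory" "HOL-Library.FuncSet" begin

lemma ln_fact_mangoldt:
  assumes "n \<le> M"
  shows "(\<Sum>d\<in>{1..M}. (mangoldt d :: real) * real (n div d)) = ln (fact n)"
  using assms
proof (induction n)
  case 0 thus ?case by simp
next
  case (Suc n)
  have split: "(mangoldt d :: real) * real (Suc n div d) = mangoldt d * real (n div d) + (if d dvd Suc n then mangoldt d else 0)" for d
    by (auto simp: div_Suc dvd_eq_mod_eq_0 algebra_simps)
  have "(\<Sum>d\<in>{1..M}. (mangoldt d :: real) * real (Suc n div d)) = (\<Sum>d\<in>{1..M}. mangoldt d * real (n div d)) + (\<Sum>d\<in>{1..M}. if d dvd Suc n then mangoldt d else 0)"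
    by (simp only: split sum.distrib)
  also have "(\<Sum>d\<in>{1..M}. if d dvd Suc n then (mangoldt d::real) else 0) = (\<Sum>d\<in>{d\<in>{1..M}. d dvd Suc n}. mangoldt d)"
    by (rule sum.inter_filter[symmetric]) simp
  also have "{d\<in>{1..M}. d dvd Suc n} = {d. d dvd Suc n}"
    using Suc.prems apply (auto dest: dvd_imp_le simp: Suc_le_eq) by (rule Nat.gr0I) auto
  also have "(\<Sum>d | d dvd Suc n. (mangoldt d :: real)) = ln (real (Suc n))"
    using mangoldt_sum[of "Suc n", where 'a=real] by simp
  also have "(\<Sum>d\<in>{1..M}. (mangoldt d::real) * real (n div d)) = ln (fact n)"
    using Suc by simp
  also have "ln (fact n) + ln (real (Suc n)) = ln (fact (Suc n) :: real)"
    by (simp add: ln_mult fact_Suc)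
  finally show ?case .
qed

lemma div2_le: "(2*n) div d \<le> 2*(n div d) + (1::nat)"
proof (cases "d = 0")
  case False
  have "n < (n div d + 1) * d" using False
    by (metis add.commute div_mult_mod_eq mod_less_divisor nat_add_left_cancel_less
        not_gr_zero distrib_right mult_1)
  hence "2*n < (2*(n div d) + 2) * d" by (simp add: algebra_simps)
  hence "(2*n) div d < 2*(n div d) + 2" using False
    by (simp add: div_less_iff_less_mult)
  thus ?thesis by simp
qed simp

lemma ln_binom_le:
  assumes "n > 0"
  shows "ln (real ((2*n) choose n)) \<le> (\<Sum>d\<in>{1..2*n}. (mangoldt d :: real))"
proof -
  have "real ((2*n) choose n) = fact (2*n) / (fact n * fact n)"
    using binomial_fact[of n "2*n"] by simp
  hence "ln (real ((2*n) choose n)) = ln (fact (2*n)) - ln (fact n) - ln (fact n)"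
    by (simp add: ln_div ln_mult)
  also have "\<dots> = (\<Sum>d\<in>{1..2*n}. (mangoldt d :: real) * (real ((2*n) div d) - 2 * real (n div d)))"
  proof -
    have e1: "(\<Sum>d\<in>{1..2*n}. (mangoldt d :: real) * real ((2*n) div d)) = ln (fact (2*n))"
      by (rule ln_fact_mangoldt) simp
    have e2: "(\<Sum>d\<in>{1..2*n}. (mangoldt d :: real) * real (n div d)) = ln (fact n)"
      by (rule ln_fact_mangoldt) simp
    have "(\<Sum>d\<in>{1..2*n}. (mangoldt d :: real) * (real ((2*n) div d) - 2 * real (n div d)))
       = (\<Sum>d\<in>{1..2*n}. (mangoldt d :: real) * real ((2*n) div d)) - 2 * (\<Sum>d\<in>{1..2*n}. (mangoldt d :: real) * real (n div d))"
      by (simp add: sum_subtractf sum_distrib_left algebra_simps)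
    thus ?thesis using e1 e2 by simp
  qed
  also have "\<dots> \<le> (\<Sum>d\<in>{1..2*n}. (mangoldt d :: real))"
  proof (intro sum_mono)
    fix d
    have "real ((2*n) div d) \<le> 2 * real (n div d) + 1"
      using div2_le[of n d] by linarith
    thus "(mangoldt d :: real) * (real ((2*n) div d) - 2 * real (n div d)) \<le> mangoldt d"
      using mangoldt_nonneg[of d] mult_left_mono[of "real ((2*n) div d) - 2 * real (n div d)" 1 "mangoldt d"]
      by simp
  qed
  finally show ?thesis .
qed

lemma psi_le:
  "(\<Sum>d\<in>{1..x}. (mangoldt d :: real)) \<le> ln (real x) * card {d\<in>{1..x}. primepow d}"
proof -
  have "(\<Sum>d\<in>{1..x}. (mangoldt d :: real)) = (\<Sum>d\<in>{d\<in>{1..x}. primepow d}. mangoldt d)"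
  proof -
    have "(\<Sum>d\<in>{1..x}. (mangoldt d :: real)) = (\<Sum>d\<in>{1..x}. if primepow d then mangoldt d else 0)"
      by (intro sum.cong) (auto simp: mangoldt_def)
    also have "\<dots> = (\<Sum>d\<in>{d\<in>{1..x}. primepow d}. mangoldt d)"
      by (rule sum.inter_filter[symmetric]) simp
    finally show ?thesis .
  qed
  also have "\<dots> \<le> (\<Sum>d\<in>{d\<in>{1..x}. primepow d}. ln (real x))"
  proof (intro sum_mono)
    fix d assume d: "d \<in> {d\<in>{1..x}. primepow d}"
    hence "d > 1" using primepow_gt_Suc_0 by auto
    hence "aprimedivisor d \<le> d" "aprimedivisor d > 0" by (auto intro: aprimedivisor_le_nat)
    thus "(mangoldt d :: real) \<le> ln (real x)" using d
      by (simp add: mangoldt_def)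
  qed
  also have "\<dots> = ln (real x) * card {d\<in>{1..x}. primepow d}" by simp
  finally show ?thesis .
qed

lemma primepow_count:
  fixes x L :: nat
  assumes "x < 2^L"
  shows "card {d\<in>{1..x}. primepow d} \<le> card {p. prime p \<and> p \<le> x} * L"
proof -
  have "{d\<in>{1..x}. primepow d} \<subseteq> (\<lambda>(p,k). p^k) ` ({p. prime p \<and> p \<le> x} \<times> {..<L})"
  proof
    fix d assume d: "d \<in> {d\<in>{1..x}. primepow d}"
    then obtain p k where pk: "prime p" "k > 0" "d = p^k" by (auto simp: primepow_def)
    have "p \<le> p^k" using pk prime_gt_1_nat[of p] self_le_power[of p k] by simp
    moreover have "2^k \<le> p^k" using pk by (simp add: prime_ge_2_nat power_mono)
    moreover have "d \<le> x" using d by auto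
    ultimately have "p \<le> x" "2^k < (2::nat)^L" using pk assms by linarith+
    hence "k < L" using power_less_imp_less_exp[of 2 k L] by simp
    thus "d \<in> (\<lambda>(p,k). p^k) ` ({p. prime p \<and> p \<le> x} \<times> {..<L})"
      using pk \<open>p \<le> x\<close> by auto
  qed
  hence "card {d\<in>{1..x}. primepow d} \<le> card ((\<lambda>(p,k). p^k) ` ({p. prime p \<and> p \<le> x} \<times> {..<L}))"
    by (intro card_mono finite_imageI) auto
  also have "\<dots> \<le> card ({p. prime p \<and> p \<le> x} \<times> {..<L})" by (rule card_image_le) auto
  also have "\<dots> = card {p. prime p \<and> p \<le> x} * L" by (simp add: card_cartesian_product)
  finally show ?thesis .
qed

lemma Pi_count:
  assumes "x < 2^L" "L \<ge> 1"
  shows "card (Pi_set N \<inter> {..x}) \<le> L^N"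
proof -
  have "Pi_set N \<inter> {..x} \<subseteq> (\<lambda>k. \<Prod>n\<in>{1..N}. n ^ k n) ` PiE {1..N} (\<lambda>_. {..<L})"
  proof
    fix m assume m: "m \<in> Pi_set N \<inter> {..x}"
    then obtain k where k: "m = (\<Prod>n\<in>{1..N}. n ^ k n)" by (auto simp: Pi_set_def)
    define k' where "k' = restrict (\<lambda>n. if n = 1 then 0 else k n) {1..N}"
    have m_eq: "m = (\<Prod>n\<in>{1..N}. n ^ k' n)" unfolding k k'_def
      by (intro prod.cong) auto
    have mpos: "m > 0" unfolding k by (intro prod_pos) auto
    have "k' \<in> PiE {1..N} (\<lambda>_. {..<L})"
    proof -
      have "k n < L" if n: "n \<in> {1..N}" "n \<noteq> 1" for n
      proof -
        have "n ^ k n dvd m" unfolding k using n by (intro dvd_prodI) auto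
        hence "n ^ k n \<le> m" using mpos by (intro dvd_imp_le) auto
        moreover have "2 ^ k n \<le> n ^ k n" using n by (intro power_mono) auto
        moreover have "m \<le> x" using m by auto
        ultimately have "2 ^ k n < (2::nat) ^ L" using assms by linarith
        thus ?thesis using power_less_imp_less_exp[of 2 "k n" L] by simp
      qed
      moreover have "0 < L" using assms by auto
      ultimately show ?thesis unfolding k'_def by auto
    qed
    thus "m \<in> (\<lambda>k. \<Prod>n\<in>{1..N}. n ^ k n) ` PiE {1..N} (\<lambda>_. {..<L})" using m_eq by blast
  qed
  hence "card (Pi_set N \<inter> {..x}) \<le> card ((\<lambda>k. \<Prod>n\<in>{1..N}. n ^ k n) ` PiE {1..N} (\<lambda>_. {..<L}))"
    by (intro card_mono finite_imageI finite_PiE) auto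
  also have "\<dots> \<le> card (PiE {1..N} (\<lambda>_. {..<L}))" by (rule card_image_le) (auto intro: finite_PiE)
  also have "\<dots> = L^N" by (simp add: card_PiE)
  finally show ?thesis .
qed

lemma Sigma_count:
  "card (Sigma_set i N \<inter> {..x}) \<le> card (Pi_set N \<inter> {..x}) ^ i"
proof -
  have "Sigma_set i N \<inter> {..x} \<subseteq> (\<lambda>m. \<Sum>j\<in>{1..i}. m j) ` PiE {1..i} (\<lambda>_. Pi_set N \<inter> {..x})"
  proof
    fix s assume s: "s \<in> Sigma_set i N \<inter> {..x}"
    then obtain m where m: "\<forall>j\<in>{1..i}. m j \<in> Pi_set N" "s = (\<Sum>j\<in>{1..i}. m j)"
      by (auto simp: Sigma_set_def)
    have "m j \<le> x" if "j \<in> {1..i}" for j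
    proof -
      have "m j \<le> (\<Sum>j\<in>{1..i}. m j)" using that by (intro member_le_sum) auto
      thus ?thesis using s m by auto
    qed
    hence "restrict m {1..i} \<in> PiE {1..i} (\<lambda>_. Pi_set N \<inter> {..x})" using m by auto
    moreover have "s = (\<Sum>j\<in>{1..i}. restrict m {1..i} j)" using m by simp
    ultimately show "s \<in> (\<lambda>m. \<Sum>j\<in>{1..i}. m j) ` PiE {1..i} (\<lambda>_. Pi_set N \<inter> {..x})" by blast
  qed
  hence "card (Sigma_set i N \<inter> {..x}) \<le> card ((\<lambda>m. \<Sum>j\<in>{1..i}. m j) ` PiE {1..i} (\<lambda>_. Pi_set N \<inter> {..x}))"
    by (intro card_mono finite_imageI finite_PiE) auto
  also have "\<dots> \<le> card (PiE {1..i} (\<lambda>_. Pi_set N \<inter> {..x}))" by (rule card_image_le) (auto intro: finite_PiE)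
  also have "\<dots> = card (Pi_set N \<inter> {..x}) ^ i" by (simp add: card_PiE)
  finally show ?thesis .
qed

lemma S_count:
  assumes "x < 2^L" "L \<ge> 1"
  shows "card (S_set d N \<inter> {..x}) \<le> d * (L^N)^d"
proof -
  have "S_set d N \<inter> {..x} = (\<Union>i\<in>{1..d}. Sigma_set i N \<inter> {..x})" by (auto simp: S_set_def)
  hence "card (S_set d N \<inter> {..x}) \<le> (\<Sum>i\<in>{1..d}. card (Sigma_set i N \<inter> {..x}))"
    using card_UN_le[of "{1..d}" "\<lambda>i. Sigma_set i N \<inter> {..x}"] by simp
  also have "\<dots> \<le> (\<Sum>i\<in>{1..d}. (L^N)^d)"
  proof (intro sum_mono)
    fix i assume i: "i \<in> {1..d}"
    have "card (Sigma_set i N \<inter> {..x}) \<le> card (Pi_set N \<inter> {..x}) ^ i" by (rule Sigma_count)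
    also have "\<dots> \<le> (L^N)^i" by (rule power_mono[OF Pi_count[OF assms]]) simp
    also have "\<dots> \<le> (L^N)^d" using i assms by (intro power_increasing) auto
    finally show "card (Sigma_set i N \<inter> {..x}) \<le> (L^N)^d" .
  qed
  also have "\<dots> = d * (L^N)^d" by simp
  finally show ?thesis .
qed

lemma exists_pow_lt: "\<exists>y::nat. y \<ge> y0 \<and> c * real y ^ K < 2 ^ y"
proof -
  have lim: "((\<lambda>y::nat. (real y * ln 2) ^ K / exp (real y * ln 2)) \<longlongrightarrow> 0) sequentially"
    by (intro filterlim_compose[OF tendsto_power_div_exp_0] filterlim_at_top_mult_tendsto_pos[where c="ln 2"]
        filterlim_real_sequentially tendsto_const) simp
  have pos: "(ln 2::real) ^ K / (\<bar>c\<bar> + 1) > 0" by simp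
  from order_tendstoD(2)[OF lim pos] have "eventually (\<lambda>y. (real y * ln 2) ^ K / exp (real y * ln 2) < (ln 2::real) ^ K / (\<bar>c\<bar> + 1)) sequentially" .
  then obtain M where M: "\<And>y. y \<ge> M \<Longrightarrow> (real y * ln 2) ^ K / exp (real y * ln 2) < (ln 2::real) ^ K / (\<bar>c\<bar> + 1)"
    by (auto simp: eventually_sequentially)
  define y where "y = max y0 M"
  have "(real y * ln 2) ^ K / exp (real y * ln 2) < (ln 2::real) ^ K / (\<bar>c\<bar> + 1)" using M y_def by auto
  moreover have "exp (real y * ln 2) = 2 ^ y"
    by (metis exp_ln_iff exp_of_nat_mult ln_realpow zero_less_numeral)
  ultimately have "real y ^ K * ln 2 ^ K / 2 ^ y < (ln 2::real) ^ K / (\<bar>c\<bar> + 1)"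
    by (simp add: power_mult_distrib)
  hence "real y ^ K * ln 2 ^ K * (\<bar>c\<bar> + 1) < (ln 2::real) ^ K * 2 ^ y"
    by (simp add: field_simps)
  hence "real y ^ K * (\<bar>c\<bar> + 1) < 2 ^ y" by (simp add: mult.commute mult.left_commute)
  hence "c * real y ^ K < 2 ^ y"
    by (smt (verit) mult_right_mono zero_le_power of_nat_0_le_iff mult.commute)
  moreover have "y \<ge> y0" using y_def by simp
  ultimately show ?thesis by blast
qed

theorem corollary6p11:
  fixes N d :: nat
  assumes "N \<ge> 1" and "d \<ge> 1"
  shows "infinite {p :: nat. prime p \<and> p \<notin> S_set d N}"
proof
  assume fin: "finite {p::nat. prime p \<and> p \<notin> S_set d N}"
  then obtain B where B: "\<And>p. prime p \<Longrightarrow> p \<notin> S_set d N \<Longrightarrow> p \<le> B"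
    by (auto simp: finite_nat_set_iff_bounded_le)
  define K where "K = N*d + 2"
  define c where "c = 2 * (real B + 2 + real d)"
  obtain y where y: "y \<ge> 3" "c * real y ^ K < 2 ^ y" using exists_pow_lt by blast
  define n where "n = (2::nat)^(y-2)"
  define x where "x = 2*n"
  have npos: "n > 0" by (simp add: n_def)
  have ym: "y - 1 = Suc (y-2)" using y(1) by simp
  have x_eq: "x = 2^(y-1)" unfolding ym by (simp add: x_def n_def)
  have xL: "x < 2^y" unfolding x_eq using y(1) by (intro power_strict_increasing) auto
  have y1: "y \<ge> 1" using y(1) by simp
  define Q where "Q = B + 1 + d * y^(N*d)"
  have pi_bound: "card {p. prime p \<and> p \<le> x} \<le> Q"
  proof -
    have "{p. prime p \<and> p \<le> x} \<subseteq> {..B} \<union> (S_set d N \<inter> {..x})" using B by auto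
    hence "card {p. prime p \<and> p \<le> x} \<le> card ({..B} \<union> (S_set d N \<inter> {..x}))"
      by (intro card_mono) auto
    also have "\<dots> \<le> card {..B} + card (S_set d N \<inter> {..x})" by (rule card_Un_le)
    also have "\<dots> \<le> (B+1) + d * (y^N)^d" using S_count[OF xL y1, of d N] by simp
    finally show ?thesis by (simp add: Q_def power_mult)
  qed
  have pp: "card {d\<in>{1..x}. primepow d} \<le> Q * y"
    using primepow_count[OF xL] pi_bound by (meson le_trans mult_le_mono1)
  have lnx_pos: "ln (real x) \<ge> 0" using npos x_def by simp
  have "ln (4 ^ n / (2 * real n)) \<le> ln (real ((2*n) choose n))"
    using central_binomial_lower_bound[OF npos] npos by (subst ln_le_cancel_iff) auto
  also have "\<dots> \<le> (\<Sum>d\<in>{1..2*n}. (mangoldt d :: real))" by (rule ln_binom_le[OF npos])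
  also have "\<dots> \<le> ln (real x) * card {d\<in>{1..x}. primepow d}" unfolding x_def by (rule psi_le)
  also have "\<dots> \<le> ln (real x) * (real Q * real y)"
    using pp lnx_pos by (intro mult_left_mono) (simp_all flip: of_nat_mult)
  finally have main: "ln (4 ^ n / (2 * real n)) \<le> ln (real x) * (real Q * real y)" .
  have e1: "ln (4 ^ n / (2 * real n)) = real x * ln 2 - ln (real x)"
  proof -
    have "ln (4 ^ n / (2 * real n)) = ln (4 ^ n) - ln (real x)" using npos by (simp add: ln_div x_def)
    also have "ln ((4::real) ^ n) = real n * ln 4" by (simp add: ln_realpow)
    also have "ln (4::real) = 2 * ln 2" using ln_realpow[of 2 2] by simp
    finally show ?thesis by (simp add: x_def)
  qed
  have e2: "ln (real x) = real (y-1) * ln 2" unfolding x_eq by (simp add: ln_realpow)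
  have "real x * ln 2 - real (y-1) * ln 2 \<le> real (y-1) * ln 2 * (real Q * real y)"
    using main e1 e2 by simp
  hence "(real x - real (y-1)) * ln 2 \<le> (real (y-1) * (real Q * real y)) * ln 2"
    by (simp add: algebra_simps)
  hence "real x - real (y-1) \<le> real (y-1) * (real Q * real y)" by simp
  moreover have a: "real (y-1) \<le> real y" by simp
  moreover have "real (y-1) * (real Q * real y) \<le> real y * (real Q * real y)"
    by (intro mult_right_mono a) simp
  moreover have "real y * (real Q * real y) = real y * real y * real Q" by simp
  ultimately have xle: "real x \<le> real y + real y * real y * real Q" by linarith
  have yS: "y = Suc (y-1)" using y1 by simp
  have "x * 2 = 2 ^ y" unfolding x_eq using power_Suc2[of "2::nat" "y-1"] yS by simp
  hence x2: "real x * 2 = 2 ^ y" by (metis of_nat_mult of_nat_numeral of_nat_power)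
  have h0: "real y \<le> real y ^ K" using y1 unfolding K_def
    by (intro self_le_power) auto
  have "real y ^ 2 \<le> real y ^ K" using y1 unfolding K_def
    by (intro power_increasing) auto
  hence hyy: "real y * real y \<le> real y ^ K" by (simp add: power2_eq_square)
  have h3: "real y * real y * real y ^ (N*d) = real y ^ K" unfolding K_def
    by (simp add: power_add power2_eq_square mult.commute)
  have h1: "real y * real y * real Q = (real B + 1) * (real y * real y) + real d * (real y * real y * real y ^ (N*d))"
    by (simp add: Q_def algebra_simps)
  have h2: "(real B + 1) * (real y * real y) \<le> (real B + 1) * real y ^ K"
    by (intro mult_left_mono hyy) simp
  have hc: "c * real y ^ K = 2 * real y ^ K + 2 * ((real B + 1) * real y ^ K) + 2 * (real d * real y ^ K)"
    by (simp add: c_def algebra_simps)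
  have "2 ^ y \<le> c * real y ^ K"
    using xle x2 h0 h1 h2 hc h3 by (simp only: h3)
  thus False using y(2) by simp
qed

end
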